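(* Let $G$ and $H$ be two graphs of orders $m$ and $n$ respectively such that $E(G)\neq\emptyset$ and $E(H)\neq\emptyset$. Then $\chi_{ei}(G\vee H)=m+n$.
   Context: All graphs are finite and simple. A path $P_4$ in $G$ is a sequence $uxyv$ of four distinct vertices with $ux,xy,yv\in E(G)$; $u,v$ are its end vertices. An $e$-injective $k$-coloring of $G$ is a function $f:V(G)\to\{1,\dots,k\}$ with $f(u)\ne f(v)$ whenever $u,v$ are the end vertices of some path $P_4$ in $G$; $\chi_{ei}(G)$ is the least such $k$. The join $G\vee H$ is the graph obtained from the disjoint union of $G$ and $H$ by adding all edges $xy$ with $x\in V(G)$, $y\in V(H)$. *)

theory Defs
  imports Main
begin

definition simple_graph :: "'a set \<Rightarrow> ('a \<Rightarrow> 'a \<Rightarrow> bool) \<Rightarrow> bool" where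
  "simple_graph V E \<longleftrightarrow> finite V \<and> (\<forall>x y. E x y \<longrightarrow> x \<in> V \<and> y \<in> V)
     \<and> (\<forall>x y. E x y \<longrightarrow> E y x) \<and> (\<forall>x. \<not> E x x)"

definition has_edge :: "'a set \<Rightarrow> ('a \<Rightarrow> 'a \<Rightarrow> bool) \<Rightarrow> bool" where
  "has_edge V E \<longleftrightarrow> (\<exists>x\<in>V. \<exists>y\<in>V. E x y)"

definition join_verts :: "'a set \<Rightarrow> 'b set \<Rightarrow> ('a + 'b) set" where
  "join_verts V W = Inl ` V \<union> Inr ` W"

fun join_edge :: "'a set \<Rightarrow> ('a \<Rightarrow> 'a \<Rightarrow> bool) \<Rightarrow> 'b set \<Rightarrow> ('b \<Rightarrow> 'b \<Rightarrow> bool)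
    \<Rightarrow> ('a + 'b) \<Rightarrow> ('a + 'b) \<Rightarrow> bool" where
  "join_edge V E W F (Inl x) (Inl y) = E x y"
| "join_edge V E W F (Inr x) (Inr y) = F x y"
| "join_edge V E W F (Inl x) (Inr y) = (x \<in> V \<and> y \<in> W)"
| "join_edge V E W F (Inr x) (Inl y) = (x \<in> W \<and> y \<in> V)"

definition P4_ends :: "'a set \<Rightarrow> ('a \<Rightarrow> 'a \<Rightarrow> bool) \<Rightarrow> 'a \<Rightarrow> 'a \<Rightarrow> bool" where
  "P4_ends V E u v \<longleftrightarrow> (\<exists>x y. distinct [u, x, y, v] \<and> u \<in> V \<and> x \<in> V \<and> y \<in> V \<and> v \<in> V
       \<and> E u x \<and> E x y \<and> E y v)"

definition ei_coloring :: "'a set \<Rightarrow> ('a \<Rightarrow> 'a \<Rightarrow> bool) \<Rightarrow> nat \<Rightarrow> ('a \<Rightarrow> nat) \<Rightarrow> bool" where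
  "ei_coloring V E k f \<longleftrightarrow> (\<forall>v\<in>V. f v \<in> {1..k})
      \<and> (\<forall>u v. P4_ends V E u v \<longrightarrow> f u \<noteq> f v)"

definition chi_ei :: "'a set \<Rightarrow> ('a \<Rightarrow> 'a \<Rightarrow> bool) \<Rightarrow> nat" where
  "chi_ei V E = (LEAST k. \<exists>f. ei_coloring V E k f)"

end

theory Submission
  imports Defs
begin

lemma all_P4:
  assumes "simple_graph V E" and "simple_graph W F"
    and "has_edge V E" and "has_edge W F"
    and "u \<in> join_verts V W" "v \<in> join_verts V W" "u \<noteq> v"
  shows "P4_ends (join_verts V W) (join_edge V E W F) u v"
proof -
  obtain a b where ab: "a \<in> V" "b \<in> V" "E a b" using assms(3) unfolding has_edge_def by blast
  obtain c d where cd: "c \<in> W" "d \<in> W" "F c d" using assms(4) unfolding has_edge_def by blast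
  have "a \<noteq> b" using ab assms(1) unfolding simple_graph_def by blast
  have "c \<noteq> d" using cd assms(2) unfolding simple_graph_def by blast
  show ?thesis
  proof (cases u)
    case (Inl u')
    then have u': "u' \<in> V" using assms(5) unfolding join_verts_def by auto
    show ?thesis
    proof (cases v)
      case (Inl v')
      then have "v' \<in> V" using assms(6) unfolding join_verts_def by auto
      then show ?thesis unfolding P4_ends_def
        using Inl \<open>u = Inl u'\<close> u' cd \<open>c \<noteq> d\<close> assms(7)
        by (intro exI[of _ "Inr c"] exI[of _ "Inr d"]) (auto simp: join_verts_def)
    next
      case (Inr v')
      then have v': "v' \<in> W" using assms(6) unfolding join_verts_def by auto
      obtain x where x: "x \<in> W" "x \<noteq> v'" using cd \<open>c \<noteq> d\<close> by metis
      obtain y where y: "y \<in> V" "y \<noteq> u'" using ab \<open>a \<noteq> b\<close> by metis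
      show ?thesis unfolding P4_ends_def
        using Inr \<open>u = Inl u'\<close> u' v' x y
        by (intro exI[of _ "Inr x"] exI[of _ "Inl y"]) (auto simp: join_verts_def)
    qed
  next
    case (Inr u')
    then have u': "u' \<in> W" using assms(5) unfolding join_verts_def by auto
    show ?thesis
    proof (cases v)
      case (Inr v')
      then have "v' \<in> W" using assms(6) unfolding join_verts_def by auto
      then show ?thesis unfolding P4_ends_def
        using Inr \<open>u = Inr u'\<close> u' ab \<open>a \<noteq> b\<close> assms(7)
        by (intro exI[of _ "Inl a"] exI[of _ "Inl b"]) (auto simp: join_verts_def)
    next
      case (Inl v')
      then have v': "v' \<in> V" using assms(6) unfolding join_verts_def by auto
      obtain x where x: "x \<in> V" "x \<noteq> v'" using ab \<open>a \<noteq> b\<close> by metis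
      obtain y where y: "y \<in> W" "y \<noteq> u'" using cd \<open>c \<noteq> d\<close> by metis
      show ?thesis unfolding P4_ends_def
        using Inl \<open>u = Inr u'\<close> u' v' x y
        by (intro exI[of _ "Inl x"] exI[of _ "Inr y"]) (auto simp: join_verts_def)
    qed
  qed
qed

theorem proposition2p6:
  fixes V :: "'a set" and E :: "'a \<Rightarrow> 'a \<Rightarrow> bool"
    and W :: "'b set" and F :: "'b \<Rightarrow> 'b \<Rightarrow> bool"
  assumes "simple_graph V E" and "simple_graph W F"
    and "card V = m" and "card W = n"
    and "has_edge V E" and "has_edge W F"
  shows "chi_ei (join_verts V W) (join_edge V E W F) = m + n"
proof -
  let ?J = "join_verts V W"
  have fin: "finite V" "finite W" using assms(1,2) unfolding simple_graph_def by auto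
  have finJ: "finite ?J" using fin unfolding join_verts_def by auto
  have cJ: "card ?J = m + n"
  proof -
    have "card (Inl ` V \<union> Inr ` W :: ('a+'b) set) = card (Inl ` V :: ('a+'b) set) + card (Inr ` W :: ('a+'b) set)"
      by (rule card_Un_disjoint) (use fin in auto)
    also have "\<dots> = m + n" using assms(3,4) by (simp add: card_image)
    finally show ?thesis unfolding join_verts_def .
  qed
  obtain h where h: "bij_betw h ?J {0..<card ?J}" using ex_bij_betw_finite_nat[OF finJ] by blast
  have up: "ei_coloring ?J (join_edge V E W F) (m + n) (Suc \<circ> h)"
    unfolding ei_coloring_def
  proof safe
    fix v assume "v \<in> ?J"
    then show "(Suc \<circ> h) v \<in> {1..m+n}" using h cJ bij_betwE by fastforce
  next
    fix u v assume p: "P4_ends ?J (join_edge V E W F) u v" and eq: "(Suc \<circ> h) u = (Suc \<circ> h) v"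
    from p have "u \<in> ?J" "v \<in> ?J" "u \<noteq> v" unfolding P4_ends_def by auto
    then show False using eq h unfolding bij_betw_def inj_on_def by auto
  qed
  have low: "m + n \<le> k" if "ei_coloring ?J (join_edge V E W F) k f" for k f
  proof -
    have inj: "inj_on f ?J"
      using that all_P4[OF assms(1,2,5,6)] unfolding ei_coloring_def inj_on_def by blast
    have "f ` ?J \<subseteq> {1..k}" using that unfolding ei_coloring_def by auto
    then have "card ?J \<le> card {1..k}" using card_inj_on_le[OF inj] by blast
    then show ?thesis using cJ by simp
  qed
  show ?thesis unfolding chi_ei_def
    by (rule Least_equality) (use up low in blast)+
qed

end
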